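(* Let $\mathbb K$ be a field of characteristic $0$, let $g\in\mathbb K[X][Y]$ be an irreducible polynomial of total degree $d$ with $\partial g/\partial Y\neq0$, and let $\phi\in\overline{\mathbb K}\{\{X\}\}$ be a root of $g$. Let $h\in\mathbb K[X,Y]$ have degree at most $\delta$ in each variable, and suppose $h(X,\phi)\neq0$. Then $|\mathrm{val}(h(X,\phi))|\le2d\delta$.
   Context: $\overline{\mathbb K}\{\{X\}\}$ denotes the field of Puiseux series over the algebraic closure $\overline{\mathbb K}$: formal sums $\phi=\sum_{t\ge t_0}f_tX^{t/e}$ with $f_t\in\overline{\mathbb K}$, $f_{t_0}\neq0$, $t_0\in\mathbb Z$, $e\in\mathbb N_{>0}$; its valuation is $\mathrm{val}(\phi)=t_0/e$. *)

theory Defs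
  imports "HOL-Algebra.Algebraic_Closure_Type" "HOL-Computational_Algebra.Polynomial"
begin

definition puiseux :: "(rat \<Rightarrow> 'a::zero) \<Rightarrow> bool" where
  "puiseux f \<longleftrightarrow> (\<exists>e::nat. e > 0 \<and> (\<exists>t0::int. \<forall>q. f q \<noteq> 0 \<longrightarrow>
      (\<exists>t::int. t \<ge> t0 \<and> q = of_int t / of_nat e)))"

definition ps_add :: "(rat \<Rightarrow> 'a::comm_ring_1) \<Rightarrow> (rat \<Rightarrow> 'a) \<Rightarrow> rat \<Rightarrow> 'a" where
  "ps_add f g = (\<lambda>q. f q + g q)"

text \<open>Cauchy product; the index set is finite for Puiseux series.\<close>
definition ps_mult :: "(rat \<Rightarrow> 'a::comm_ring_1) \<Rightarrow> (rat \<Rightarrow> 'a) \<Rightarrow> rat \<Rightarrow> 'a" where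
  "ps_mult f g = (\<lambda>q. \<Sum>a\<in>{a. f a \<noteq> 0 \<and> g (q - a) \<noteq> 0}. f a * g (q - a))"

definition ps_of_poly :: "'k::field poly \<Rightarrow> rat \<Rightarrow> 'k alg_closure" where
  "ps_of_poly p = (\<lambda>q. if q \<in> \<int> \<and> q \<ge> 0 then to_ac (coeff p (nat \<lfloor>q\<rfloor>)) else 0)"

definition ps_eval :: "'k::field poly poly \<Rightarrow> (rat \<Rightarrow> 'k alg_closure) \<Rightarrow> rat \<Rightarrow> 'k alg_closure" where
  "ps_eval h phi = foldr (\<lambda>c acc. ps_add (ps_of_poly c) (ps_mult phi acc)) (coeffs h) (\<lambda>_. 0)"

definition ps_val :: "(rat \<Rightarrow> 'a::zero) \<Rightarrow> rat" where
  "ps_val f = (LEAST q. f q \<noteq> 0)"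

definition total_degree :: "'a::zero poly poly \<Rightarrow> nat" where
  "total_degree g = Max ({0} \<union> {i + degree (coeff g i) | i. coeff g i \<noteq> 0})"

end

theory Submission
  imports Defs "Subresultants.Subresultant_Gcd" "HOL-Computational_Algebra.Formal_Laurent_Series"
begin


typedef 'a fw = "UNIV :: 'a::field set" morphisms un_fw mk_fw by auto

setup_lifting type_definition_fw

instantiation fw :: (field) field
begin
lift_definition zero_fw :: "'a fw" is 0 .
lift_definition one_fw :: "'a fw" is 1 .
lift_definition plus_fw :: "'a fw \<Rightarrow> 'a fw \<Rightarrow> 'a fw" is "(+)" .
lift_definition minus_fw :: "'a fw \<Rightarrow> 'a fw \<Rightarrow> 'a fw" is "(-)" .
lift_definition uminus_fw :: "'a fw \<Rightarrow> 'a fw" is uminus .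
lift_definition times_fw :: "'a fw \<Rightarrow> 'a fw \<Rightarrow> 'a fw" is "(*)" .
lift_definition inverse_fw :: "'a fw \<Rightarrow> 'a fw" is inverse .
lift_definition divide_fw :: "'a fw \<Rightarrow> 'a fw \<Rightarrow> 'a fw" is "(/)" .
instance
  by standard (transfer; simp add: algebra_simps divide_inverse)+
end

instantiation fw :: (field)
  "{unique_euclidean_ring, normalization_euclidean_semiring, normalization_semidom_multiplicative}"
begin
definition [simp]: "normalize_fw = (normalize_field :: 'a fw \<Rightarrow> _)"
definition [simp]: "unit_factor_fw = (unit_factor_field :: 'a fw \<Rightarrow> _)"
definition [simp]: "modulo_fw = (mod_field :: 'a fw \<Rightarrow> _)"
definition [simp]: "euclidean_size_fw = (euclidean_size_field :: 'a fw \<Rightarrow> _)"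
definition [simp]: "division_segment (x :: 'a fw) = 1"
instance
  by standard
    (simp_all add: dvd_field_iff field_split_simps split: if_splits)
end

instantiation fw :: (field) euclidean_ring_gcd
begin
definition gcd_fw :: "'a fw \<Rightarrow> 'a fw \<Rightarrow> 'a fw" where
  "gcd_fw = Euclidean_Algorithm.gcd"
definition lcm_fw :: "'a fw \<Rightarrow> 'a fw \<Rightarrow> 'a fw" where
  "lcm_fw = Euclidean_Algorithm.lcm"
definition Gcd_fw :: "'a fw set \<Rightarrow> 'a fw" where
 "Gcd_fw = Euclidean_Algorithm.Gcd"
definition Lcm_fw :: "'a fw set \<Rightarrow> 'a fw" where
 "Lcm_fw = Euclidean_Algorithm.Lcm"
instance by standard (simp_all add: gcd_fw_def lcm_fw_def Gcd_fw_def Lcm_fw_def)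
end

instance fw :: (field) field_gcd ..

lemma un_fw_simps[simp]:
  "un_fw (x + y) = un_fw x + un_fw y" "un_fw (x * y) = un_fw x * un_fw y"
  "un_fw 0 = 0" "un_fw 1 = 1" "un_fw (- x) = - un_fw x" "un_fw (x - y) = un_fw x - un_fw y"
  by (simp_all add: plus_fw.rep_eq times_fw.rep_eq zero_fw.rep_eq one_fw.rep_eq
      uminus_fw.rep_eq minus_fw.rep_eq)

lemma un_fw_eq0: "un_fw x = 0 \<longleftrightarrow> x = 0"
  by (metis un_fw_inject un_fw_simps(3))

lemma mk_fw_0[simp]: "mk_fw 0 = 0"
  by (metis mk_fw_inverse un_fw_inverse un_fw_simps(3) UNIV_I)

lemma un_fw_hom: "comm_ring_hom un_fw"
  by unfold_locales simp_all

definition U1 :: "'a::field fw poly \<Rightarrow> 'a poly" where "U1 = map_poly un_fw"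
definition W1 :: "'a::field poly \<Rightarrow> 'a fw poly" where "W1 = map_poly mk_fw"

lemma U1_W1[simp]: "U1 (W1 p) = p"
  unfolding U1_def W1_def by (subst map_poly_map_poly) (simp_all add: o_def mk_fw_inverse)

lemma W1_U1[simp]: "W1 (U1 p) = p"
  unfolding U1_def W1_def by (subst map_poly_map_poly) (simp_all add: o_def un_fw_inverse un_fw_eq0)

lemma U1_hom: "comm_ring_hom (U1 :: 'a::field fw poly \<Rightarrow> _)"
proof -
  interpret A: comm_ring_hom "un_fw :: 'a fw \<Rightarrow> _" by (rule un_fw_hom)
  interpret B: map_poly_comm_ring_hom "un_fw :: 'a fw \<Rightarrow> _" ..
  show ?thesis unfolding U1_def by unfold_locales (simp_all add: B.hom_add B.hom_mult)
qed

lemma W1_0[simp]: "W1 0 = 0" unfolding W1_def by simp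
lemma U1_0[simp]: "U1 0 = 0" unfolding U1_def by simp

lemma U1_eq0: "U1 p = 0 \<longleftrightarrow> p = 0"
  by (metis W1_U1 W1_0 U1_0)

definition UU :: "'a::field fw poly poly \<Rightarrow> 'a poly poly" where "UU = map_poly U1"
definition WW :: "'a::field poly poly \<Rightarrow> 'a fw poly poly" where "WW = map_poly W1"


lemma UU_WW[simp]: "UU (WW p) = p"
  unfolding UU_def WW_def by (subst map_poly_map_poly) (simp_all add: o_def)

lemma WW_UU[simp]: "WW (UU p) = p"
  unfolding UU_def WW_def by (subst map_poly_map_poly) (simp_all add: o_def)

lemma UU_hom: "comm_ring_hom (UU :: 'a::field fw poly poly \<Rightarrow> _)"
proof -
  interpret A: comm_ring_hom "U1 :: 'a fw poly \<Rightarrow> _" by (rule U1_hom)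
  interpret B: map_poly_comm_ring_hom "U1 :: 'a fw poly \<Rightarrow> _" ..
  show ?thesis unfolding UU_def by unfold_locales (simp_all add: B.hom_add B.hom_mult)
qed

lemma WW_mult: "WW (a * b) = WW a * WW (b :: 'a::field poly poly)"
proof -
  interpret A: comm_ring_hom "UU :: 'a fw poly poly \<Rightarrow> _" by (rule UU_hom)
  have "WW (a * b) = WW (UU (WW a) * UU (WW b))" by simp
  also have "\<dots> = WW (UU (WW a * WW b))" by (simp add: A.hom_mult)
  finally show ?thesis by simp
qed

lemma WW_one: "WW 1 = (1 :: 'a::field fw poly poly)"
proof -
  interpret A: comm_ring_hom "UU :: 'a fw poly poly \<Rightarrow> _" by (rule UU_hom)
  have "UU (1::'a fw poly poly) = 1" by (rule A.hom_one)
  then have "WW (UU (1::'a fw poly poly)) = WW 1" by simp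
  then show ?thesis using WW_UU by metis
qed

lemma WW_irreducible:
  fixes g :: "'a::field poly poly"
  assumes irr: "irreducible g" shows "irreducible (WW g)"
proof -
  interpret A: comm_ring_hom "UU :: 'a fw poly poly \<Rightarrow> _" by (rule UU_hom)
  have "WW g \<noteq> 0" using irr by (metis UU_WW A.hom_zero irreducible_def)
  moreover have "\<not> is_unit (WW g)"
  proof
    assume "is_unit (WW g)"
    then obtain c where "WW g * c = 1" by (auto elim: dvdE simp: mult.commute)
    then have "g * UU c = 1" by (metis UU_WW A.hom_mult A.hom_one)
    then have "is_unit g" by (metis dvdI)
    with irr show False by (simp add: irreducible_def)
  qed
  moreover have "is_unit a \<or> is_unit b" if ab: "WW g = a * b" for a b
  proof -
    have "g = UU a * UU b" by (metis UU_WW ab A.hom_mult)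
    then have "is_unit (UU a) \<or> is_unit (UU b)" using irr by (simp add: irreducible_def)
    then show ?thesis by (metis WW_UU WW_mult WW_one dvdE dvdI)
  qed
  ultimately show ?thesis by (auto simp: irreducible_def)
qed

lemma res_nonzero:
  fixes g h :: "'a::field poly poly"
  assumes irr: "irreducible g" and ndvd: "\<not> g dvd h"
  shows "resultant g h \<noteq> 0"
proof
  interpret A: comm_ring_hom "UU :: 'a fw poly poly \<Rightarrow> _" by (rule UU_hom)
  interpret A1: comm_ring_hom "U1 :: 'a fw poly \<Rightarrow> _" by (rule U1_hom)
  assume R: "resultant g h = 0"
  have deg: "degree (UU p) = degree p" for p :: "'a fw poly poly"
    unfolding UU_def by (rule degree_map_poly) (simp add: U1_eq0)
  have "resultant g h = U1 (resultant (WW g) (WW h))"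
  proof -
    have e1: "map_poly U1 (WW g) = g" "map_poly U1 (WW h) = h" using UU_WW unfolding UU_def by auto
    have "resultant (map_poly U1 (WW g)) (map_poly U1 (WW h)) = U1 (resultant (WW g) (WW h))"
      by (rule A1.resultant_map_poly) (simp_all add: deg[unfolded UU_def])
    then show ?thesis unfolding e1 .
  qed
  with R have "resultant (WW g) (WW h) = 0" by (metis U1_eq0)
  then have dgcd: "degree (gcd (WW g) (WW h)) \<noteq> 0" using resultant_0_gcd by blast
  have "gcd (WW g) (WW h) dvd WW g" by simp
  from irreducibleD'[OF WW_irreducible[OF irr] this]
  have "WW g dvd gcd (WW g) (WW h) \<or> gcd (WW g) (WW h) dvd 1" .
  moreover have "\<not> gcd (WW g) (WW h) dvd 1"
  proof
    assume "gcd (WW g) (WW h) dvd 1"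
    then have "degree (gcd (WW g) (WW h)) \<le> degree (1 :: 'a fw poly poly)"
      using divides_degree by fastforce
    with dgcd show False by simp
  qed
  ultimately have "WW g dvd WW h" by (meson dvd_trans gcd_dvd2)
  then obtain q where "WW h = WW g * q" unfolding dvd_def by blast
  then have "h = g * UU q" by (metis UU_WW A.hom_mult)
  then show False using ndvd by simp
qed



definition low :: "'a::zero fls \<Rightarrow> int \<Rightarrow> bool" where
  "low F a \<longleftrightarrow> (\<forall>n<a. fls_nth F n = 0)"

lemma low_mono: "low F a \<Longrightarrow> b \<le> a \<Longrightarrow> low F b"
  unfolding low_def by auto

lemma low_zero[simp]: "low 0 a" unfolding low_def by simp

lemma low_add: "low F a \<Longrightarrow> low G a \<Longrightarrow> low (F + G) a"
  unfolding low_def by simp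

lemma low_uminus: "low (F::'a::ab_group_add fls) a \<Longrightarrow> low (-F) a"
  unfolding low_def by simp

lemma low_one: "low 1 0" unfolding low_def by simp

lemma low_subdeg: "F \<noteq> 0 \<Longrightarrow> low F a \<Longrightarrow> a \<le> fls_subdegree F"
  unfolding low_def by (rule fls_subdegree_geI) auto

lemma low_self: "low F (fls_subdegree F)"
  unfolding low_def by simp

lemma low_mult:
  fixes F G :: "'a::{comm_monoid_add,mult_zero} fls"
  assumes "low F a" "low G b" shows "low (F * G) (a + b)"
proof (cases "F = 0 \<or> G = 0")
  case True then show ?thesis by auto
next
  case False
  then have "a \<le> fls_subdegree F" "b \<le> fls_subdegree G" using low_subdeg assms by auto
  then show ?thesis unfolding low_def by (auto intro: fls_times_nth_eq0)
qed

lemma low_sum: "(\<And>x. x \<in> A \<Longrightarrow> low (f x) a) \<Longrightarrow> low (sum f A) a"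
  unfolding low_def by (auto simp: fls_nth_sum)

lemma low_prod:
  fixes f :: "'b \<Rightarrow> 'a::comm_semiring_1 fls"
  shows "finite A \<Longrightarrow> (\<And>x. x \<in> A \<Longrightarrow> low (f x) (c x)) \<Longrightarrow> low (prod f A) (sum c A)"
proof (induction A rule: finite_induct)
  case empty then show ?case by (simp add: low_one)
next
  case (insert x A)
  then show ?case by (simp add: low_mult)
qed

lemma low_pow:
  fixes F :: "'a::comm_semiring_1 fls"
  shows "low F a \<Longrightarrow> low (F ^ n) (int n * a)"
proof (induction n)
  case 0 then show ?case by (simp add: low_one)
next
  case (Suc n)
  then have "low (F * F ^ n) (a + int n * a)" by (intro low_mult) auto
  then show ?case by (simp add: algebra_simps)
qed

definition kap :: "'k::field \<Rightarrow> 'k alg_closure fls" where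
  "kap a = fls_const (to_ac a)"

lemma fls_const_add': "fls_const (a + b) = fls_const a + (fls_const b :: 'a::monoid_add fls)"
  by (rule fls_eqI) simp

lemma kap_hom: "comm_ring_hom (kap :: 'k::field \<Rightarrow> _)"
  by unfold_locales (auto simp: kap_def fls_const_add')

definition iota :: "nat \<Rightarrow> 'k::field poly \<Rightarrow> 'k alg_closure fls" where
  "iota e c = poly (map_poly kap c) (fls_X ^ e)"

lemma iota_hom: "comm_ring_hom (iota e :: 'k::field poly \<Rightarrow> _)"
proof -
  interpret K: comm_ring_hom "kap :: 'k \<Rightarrow> _" by (rule kap_hom)
  interpret MK: map_poly_comm_ring_hom "kap :: 'k \<Rightarrow> _" ..
  show ?thesis
    by unfold_locales (auto simp: iota_def MK.hom_add MK.hom_mult)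
qed


lemma iota_pCons: "iota e (pCons a p) = kap a + fls_X ^ e * iota e p"
proof -
  interpret K: comm_ring_hom "kap :: 'a::field \<Rightarrow> _" by (rule kap_hom)
  show ?thesis unfolding iota_def by (simp add: K.map_poly_pCons_hom)
qed

lemma fls_X_pow_mult_nth: "fls_nth (fls_X ^ e * F) n = fls_nth F (n - int e)"
  by (simp add: fls_X_power_times_conv_shift)

lemma iota_nth:
  assumes e: "e > 0"
  shows "fls_nth (iota e c) n = (if 0 \<le> n \<and> int e dvd n then to_ac (coeff c (nat n div e)) else 0)"
proof (induction c arbitrary: n)
  case 0
  then show ?case by (simp add: iota_def)
next
  case (pCons a p)
  have eq: "fls_nth (iota e (pCons a p)) n = (if n = 0 then to_ac a else 0) + fls_nth (iota e p) (n - int e)"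
    by (simp add: iota_pCons fls_X_pow_mult_nth kap_def)
  show ?case
  proof (cases "n < 0")
    case True then show ?thesis using eq pCons.IH[of "n - int e"] by simp
  next
    case False
    show ?thesis
    proof (cases "n = 0")
      case True then show ?thesis using eq pCons.IH[of "n - int e"] e by simp
    next
      case n0: False
      with False have npos: "n > 0" by simp
      show ?thesis
      proof (cases "int e dvd n")
        case True
        then obtain k where k: "n = int e * k" by (auto elim: dvdE)
        with npos e have kpos: "k > 0" by (simp add: zero_less_mult_iff)
        have "n - int e = int e * (k - 1)" using k by (simp add: algebra_simps)
        moreover have "nat (int e * (k - 1)) div e = nat k - 1"
          using kpos e by (simp add: nat_mult_distrib nat_diff_distrib)
        moreover have "nat n div e = nat k" using k kpos e by (simp add: nat_mult_distrib)
        moreover have "coeff (pCons a p) (nat k) = coeff p (nat k - 1)"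
          using kpos by (cases "nat k") auto
        ultimately show ?thesis using eq pCons.IH[of "n - int e"] n0 npos kpos e True
          by (simp add: zero_le_mult_iff)
      next
        case False
        then have "\<not> int e dvd (n - int e)" using dvd_diff[of "int e" "n - int e" "- int e"] by auto
        then show ?thesis using eq pCons.IH[of "n - int e"] n0 False by simp
      qed
    qed
  qed
qed


lemma iota_low: "e > 0 \<Longrightarrow> low (iota e c) 0"
  unfolding low_def by (simp add: iota_nth)

lemma iota_nth_mult: "e > 0 \<Longrightarrow> fls_nth (iota e c) (int (e * k)) = to_ac (coeff c k)"
  by (simp add: iota_nth del: of_nat_mult)

lemma iota_eq0: "e > 0 \<Longrightarrow> iota e c = 0 \<Longrightarrow> c = 0"
  by (metis (no_types) coeff_0 fls_zero_nth iota_nth_mult poly_eqI to_ac_0 to_ac_eq_iff)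

lemma iota_subdeg_le: "e > 0 \<Longrightarrow> c \<noteq> 0 \<Longrightarrow> fls_subdegree (iota e c) \<le> int (e * degree c)"
  by (rule fls_subdegree_leI) (simp add: iota_nth_mult del: of_nat_mult)

lemma iota_inj_hom: "e > 0 \<Longrightarrow> inj_comm_ring_hom (iota e :: 'k::field poly \<Rightarrow> _)"
proof -
  assume e: "e > 0"
  interpret comm_ring_hom "iota e :: 'k::field poly \<Rightarrow> _" by (rule iota_hom)
  show ?thesis by unfold_locales (use e iota_eq0 in auto)
qed

definition latt :: "nat \<Rightarrow> (rat \<Rightarrow> 'a::zero) \<Rightarrow> int \<Rightarrow> bool" where
  "latt e f N \<longleftrightarrow> (\<forall>q. f q \<noteq> 0 \<longrightarrow> (\<exists>t::int. t \<ge> N \<and> q = of_int t / of_nat e))"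

definition tofls :: "nat \<Rightarrow> (rat \<Rightarrow> 'a::zero) \<Rightarrow> 'a fls" where
  "tofls e f = Abs_fls (\<lambda>n. f (of_int n / of_nat e))"

lemma rat_div_e_inj: "e > 0 \<Longrightarrow> (of_int t / of_nat e :: rat) = of_int u / of_nat e \<longleftrightarrow> t = u"
  by (simp add: divide_cancel_right)

lemma tofls_nth:
  assumes e: "e > 0" and f: "latt e f N"
  shows "fls_nth (tofls e f) n = f (of_int n / of_nat e)"
proof -
  have "\<forall>\<^sub>\<infinity> m::nat. f (of_int (- int m) / of_nat e) = 0"
    unfolding MOST_nat
  proof (intro exI allI impI)
    fix m :: nat assume m: "m > nat (- N)"
    show "f (of_int (- int m) / of_nat e) = 0"
    proof (rule ccontr)
      assume "f (of_int (- int m) / of_nat e) \<noteq> 0"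
      then obtain t where "t \<ge> N" "of_int (- int m) / of_nat e = (of_int t / of_nat e :: rat)"
        using f unfolding latt_def by blast
      then have "- int m = t" "t \<ge> N" using rat_div_e_inj[OF e, of "- int m" t] by blast+
      with m show False by auto
    qed
  qed
  then show ?thesis unfolding tofls_def by (simp add: Abs_fls_inverse)
qed

lemma tofls_low: "e > 0 \<Longrightarrow> latt e f N \<Longrightarrow> low (tofls e f) N"
  unfolding low_def
proof (intro allI impI)
  fix n assume e: "e > 0" and f: "latt e f N" and n: "n < N"
  show "fls_nth (tofls e f) n = 0"
  proof (rule ccontr)
    assume "fls_nth (tofls e f) n \<noteq> 0"
    then have "f (of_int n / of_nat e) \<noteq> 0" using tofls_nth[OF e f] by simp
    then obtain t where "t \<ge> N" "(of_int n / of_nat e :: rat) = of_int t / of_nat e"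
      using f unfolding latt_def by blast
    with rat_div_e_inj[OF e, of n t] n show False by auto
  qed
qed

lemma tofls_eq0:
  assumes e: "e > 0" and f: "latt e f N"
  shows "tofls e f = 0 \<longleftrightarrow> f = (\<lambda>_. 0)"
proof
  assume z: "tofls e f = 0"
  show "f = (\<lambda>_. 0)"
  proof
    fix q show "f q = 0"
    proof (rule ccontr)
      assume "f q \<noteq> 0"
      then obtain t where "q = of_int t / of_nat e" using f unfolding latt_def by blast
      with z tofls_nth[OF e f, of t] \<open>f q \<noteq> 0\<close> show False by simp
    qed
  qed
next
  assume "f = (\<lambda>_. 0)"
  then show "tofls e f = 0" unfolding fls_eq_iff using tofls_nth[OF e f] by simp
qed

lemma fls_mult_nth_range:
  fixes F G :: "'a::comm_ring_1 fls"
  assumes F: "low F N1" and G: "low G N2"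
  shows "fls_nth (F*G) n = (\<Sum>i\<in>{N1..n-N2}. fls_nth F i * fls_nth G (n-i))"
proof (cases "F = 0 \<or> G = 0")
  case True then show ?thesis by auto
next
  case False
  then have d: "N1 \<le> fls_subdegree F" "N2 \<le> fls_subdegree G" using low_subdeg F G by auto
  have "fls_nth (F*G) n = (\<Sum>i\<in>{fls_subdegree F..n - fls_subdegree G}. fls_nth F i * fls_nth G (n-i))"
    by (rule fls_times_nth(2))
  also have "\<dots> = (\<Sum>i\<in>{N1..n-N2}. fls_nth F i * fls_nth G (n-i))"
    by (rule sum.mono_neutral_left) (use d in auto)
  finally show ?thesis .
qed


lemma latt_mono: "latt e f N \<Longrightarrow> M \<le> N \<Longrightarrow> latt e f M"
  unfolding latt_def by (meson order.trans)

lemma ps_mult_support: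
  assumes e: "e > 0" and f: "latt e f N1" and g: "latt e g N2"
    and a: "f a \<noteq> 0" "g (q - a) \<noteq> 0"
  obtains t u where "t \<ge> N1" "u \<ge> N2" "a = of_int t / of_nat e" "q = of_int (t + u) / of_nat e"
proof -
  obtain t where t: "t \<ge> N1" "a = of_int t / of_nat e" using f a unfolding latt_def by blast
  obtain u where u: "u \<ge> N2" "q - a = of_int u / of_nat e" using g a unfolding latt_def by blast
  have "q = of_int (t + u) / of_nat e" using t u by (simp add: add_divide_distrib algebra_simps)
  then show ?thesis using that t u by blast
qed

lemma ps_mult_latt:
  assumes e: "e > 0" and f: "latt e f N1" and g: "latt e g N2"
  shows "latt e (ps_mult f g) (N1 + N2)"
  unfolding latt_def
proof (intro allI impI)
  fix q assume "ps_mult f g q \<noteq> 0"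
  then obtain a where "f a \<noteq> 0" "g (q - a) \<noteq> 0"
    unfolding ps_mult_def by (metis (mono_tags, lifting) empty_Collect_eq sum.empty)
  from ps_mult_support[OF e f g this] show "\<exists>t\<ge>N1 + N2. q = of_int t / of_nat e"
    by (metis add_mono)
qed

lemma ps_mult_tofls:
  assumes e: "e > 0" and f: "latt e f N1" and g: "latt e g N2"
  shows "tofls e (ps_mult f g) = tofls e f * tofls e g"
proof (rule fls_eqI)
  fix n
  define qq where "qq = (of_int n / of_nat e :: rat)"
  define SS where "SS = {a. f a \<noteq> 0 \<and> g (qq - a) \<noteq> 0}"
  define hh where "hh = (\<lambda>t::int. of_int t / of_nat e :: rat)"
  have injh: "inj_on hh XX" for XX unfolding hh_def inj_on_def using rat_div_e_inj[OF e] by blast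
  have qa: "qq - hh t = hh (n - t)" for t unfolding qq_def hh_def by (simp add: diff_divide_distrib)
  have sub: "SS \<subseteq> hh ` {N1..n-N2}"
  proof
    fix a assume "a \<in> SS"
    then have a: "f a \<noteq> 0" "g (qq - a) \<noteq> 0" unfolding SS_def by auto
    from ps_mult_support[OF e f g a] obtain t u where tu: "t \<ge> N1" "u \<ge> N2"
      "a = hh t" "qq = hh (t + u)" unfolding hh_def by blast
    have "n = t + u" using tu(4) unfolding qq_def hh_def using rat_div_e_inj[OF e] by blast
    then show "a \<in> hh ` {N1..n-N2}" using tu by auto
  qed
  have "fls_nth (tofls e (ps_mult f g)) n = ps_mult f g qq"
    using tofls_nth[OF e ps_mult_latt[OF e f g]] qq_def by simp
  also have "\<dots> = (\<Sum>a\<in>SS. f a * g (qq - a))" unfolding ps_mult_def SS_def by simp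
  also have "\<dots> = (\<Sum>a\<in>hh ` {N1..n-N2}. f a * g (qq - a))"
    by (rule sum.mono_neutral_left) (use sub in \<open>auto simp: SS_def\<close>)
  also have "\<dots> = (\<Sum>t\<in>{N1..n-N2}. f (hh t) * g (hh (n - t)))"
    by (subst sum.reindex[OF injh]) (simp add: qa)
  also have "\<dots> = (\<Sum>t\<in>{N1..n-N2}. fls_nth (tofls e f) t * fls_nth (tofls e g) (n - t))"
    using tofls_nth[OF e f] tofls_nth[OF e g] unfolding hh_def by simp
  also have "\<dots> = fls_nth (tofls e f * tofls e g) n"
    by (rule fls_mult_nth_range[symmetric]) (use tofls_low[OF e f] tofls_low[OF e g] in auto)
  finally show "fls_nth (tofls e (ps_mult f g)) n = fls_nth (tofls e f * tofls e g) n" .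
qed

lemma ps_add_latt: "latt e f N \<Longrightarrow> latt e g N \<Longrightarrow> latt e (ps_add f g) N"
  unfolding latt_def ps_add_def by (metis add.right_neutral)

lemma ps_add_tofls:
  assumes e: "e > 0" and f: "latt e f N" and g: "latt e g N"
  shows "tofls e (ps_add f g) = tofls e f + tofls e g"
  using tofls_nth[OF e ps_add_latt[OF f g]] tofls_nth[OF e f] tofls_nth[OF e g]
  by (simp add: fls_eq_iff ps_add_def)

lemma rat_div_e_int: "e > 0 \<Longrightarrow> (of_int n / of_nat e :: rat) \<in> \<int> \<longleftrightarrow> int e dvd n"
proof
  assume e: "e > 0" and "of_int n / of_nat e \<in> (\<int> :: rat set)"
  then obtain k where "of_int n / of_nat e = (of_int k :: rat)" by (auto elim: Ints_cases)
  then have "(of_int n :: rat) = of_int (int e * k)" using e by (simp add: field_simps)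
  then have "n = int e * k" by linarith
  then show "int e dvd n" by simp
next
  assume e: "e > 0" and "int e dvd n"
  then obtain k where "n = int e * k" by (auto elim: dvdE)
  then have "(of_int n / of_nat e :: rat) = of_int k" using e by simp
  then show "of_int n / of_nat e \<in> (\<int> :: rat set)" by simp
qed

lemma ps_of_poly_latt: "e > 0 \<Longrightarrow> latt e (ps_of_poly c) 0"
  unfolding latt_def ps_of_poly_def
proof (intro allI impI)
  fix q :: rat assume e: "e > 0" and "(if q \<in> \<int> \<and> 0 \<le> q then to_ac (coeff c (nat \<lfloor>q\<rfloor>)) else 0) \<noteq> 0"
  then have q: "q \<in> \<int>" "q \<ge> 0" by (auto split: if_splits)
  then obtain k where k: "q = of_int k" by (auto elim: Ints_cases)
  then have "q = of_int (int e * k) / of_nat e" using e by simp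
  moreover have "int e * k \<ge> 0" using q k by simp
  ultimately show "\<exists>t\<ge>0. q = of_int t / of_nat e" by blast
qed

lemma ps_of_poly_tofls: "e > 0 \<Longrightarrow> tofls e (ps_of_poly c) = iota e c"
proof (rule fls_eqI)
  fix n assume e: "e > 0"
  have "fls_nth (tofls e (ps_of_poly c)) n = ps_of_poly c (of_int n / of_nat e)"
    by (rule tofls_nth[OF e ps_of_poly_latt[OF e]])
  also have "\<dots> = fls_nth (iota e c) n"
  proof (cases "int e dvd n")
    case True
    then obtain k where k: "n = int e * k" by (auto elim: dvdE)
    then have q: "(of_int n / of_nat e :: rat) = of_int k" using e by simp
    have "nat n div e = nat k" using k e
      by (cases "k \<ge> 0") (simp_all add: nat_mult_distrib mult_nonneg_nonpos)
    moreover have "0 \<le> n \<longleftrightarrow> 0 \<le> k" using k e by (simp add: zero_le_mult_iff)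
    ultimately show ?thesis using True e unfolding ps_of_poly_def q by (simp add: iota_nth)
  next
    case False
    then show ?thesis using rat_div_e_int[OF e, of n] e unfolding ps_of_poly_def by (simp add: iota_nth)
  qed
  finally show "fls_nth (tofls e (ps_of_poly c)) n = fls_nth (iota e c) n" .
qed


lemma poly_Poly_foldr: "poly (Poly xs) x = foldr (\<lambda>a b. a + x * b) xs 0"
  by (induction xs) auto

lemma tofls_zero: "e > 0 \<Longrightarrow> tofls e (\<lambda>_. 0 :: 'a::zero) = 0"
  using tofls_eq0[of e "\<lambda>_. 0 :: 'a" 0] by (simp add: latt_def)

lemma ps_eval_foldr:
  assumes e: "e > 0" and phi: "latt e phi N"
  shows "\<exists>M. latt e (foldr (\<lambda>c acc. ps_add (ps_of_poly c) (ps_mult phi acc)) cs (\<lambda>_. 0)) M \<and>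
    tofls e (foldr (\<lambda>c acc. ps_add (ps_of_poly c) (ps_mult phi acc)) cs (\<lambda>_. 0)) =
    foldr (\<lambda>c acc. iota e c + tofls e phi * acc) cs 0"
proof (induction cs)
  case Nil
  then show ?case using tofls_zero[OF e] by (simp add: latt_def)
next
  case (Cons c cs)
  then obtain M where M: "latt e (foldr (\<lambda>c acc. ps_add (ps_of_poly c) (ps_mult phi acc)) cs (\<lambda>_. 0)) M"
    and eq: "tofls e (foldr (\<lambda>c acc. ps_add (ps_of_poly c) (ps_mult phi acc)) cs (\<lambda>_. 0)) =
    foldr (\<lambda>c acc. iota e c + tofls e phi * acc) cs 0" by blast
  define acc where "acc = foldr (\<lambda>c acc. ps_add (ps_of_poly c) (ps_mult phi acc)) cs (\<lambda>_. 0)"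
  define B where "B = min 0 (N + M)"
  have L1: "latt e (ps_of_poly c) B" by (rule latt_mono[OF ps_of_poly_latt[OF e]]) (simp add: B_def)
  have L2: "latt e (ps_mult phi acc) B" by (rule latt_mono[OF ps_mult_latt[OF e phi M[folded acc_def]]]) (simp add: B_def)
  have "latt e (ps_add (ps_of_poly c) (ps_mult phi acc)) B" by (rule ps_add_latt[OF L1 L2])
  moreover have "tofls e (ps_add (ps_of_poly c) (ps_mult phi acc)) = iota e c + tofls e phi * tofls e acc"
    using ps_add_tofls[OF e L1 L2] ps_of_poly_tofls[OF e] ps_mult_tofls[OF e phi M[folded acc_def]] by simp
  ultimately show ?case using eq unfolding acc_def by auto
qed

lemma ps_eval_tofls:
  assumes e: "e > 0" and phi: "latt e phi N"
  shows "\<exists>M. latt e (ps_eval h phi) M"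
    and "tofls e (ps_eval h phi) = poly (map_poly (iota e) h) (tofls e phi)"
proof -
  from ps_eval_foldr[OF e phi, of "coeffs h"]
  obtain M where M: "latt e (ps_eval h phi) M"
    and eq: "tofls e (ps_eval h phi) = foldr (\<lambda>c acc. iota e c + tofls e phi * acc) (coeffs h) 0"
    unfolding ps_eval_def by blast
  show "\<exists>M. latt e (ps_eval h phi) M" using M by blast
  have "foldr (\<lambda>c acc. iota e c + tofls e phi * acc) (coeffs h) 0 =
        foldr (\<lambda>a b. a + tofls e phi * b) (map (iota e) (coeffs h)) 0"
    by (simp add: foldr_map o_def)
  then show "tofls e (ps_eval h phi) = poly (map_poly (iota e) h) (tofls e phi)"
    using eq by (simp add: map_poly_def poly_Poly_foldr)
qed

lemma ps_val_tofls:
  assumes e: "e > 0" and f: "latt e f N" and nz: "f \<noteq> (\<lambda>_. 0)"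
  shows "ps_val f = of_int (fls_subdegree (tofls e f)) / of_nat e"
proof -
  define F where "F = tofls e f"
  have F0: "F \<noteq> 0" using tofls_eq0[OF e f] nz F_def by simp
  show ?thesis unfolding ps_val_def F_def[symmetric]
  proof (rule Least_equality)
    show "f (of_int (fls_subdegree F) / of_nat e) \<noteq> 0"
      using tofls_nth[OF e f, of "fls_subdegree F"] nth_fls_subdegree_nonzero[OF F0] F_def by simp
  next
    fix y assume "f y \<noteq> 0"
    then obtain t where t: "y = of_int t / of_nat e" using f unfolding latt_def by blast
    then have "fls_nth F t \<noteq> 0" using tofls_nth[OF e f, of t] \<open>f y \<noteq> 0\<close> F_def by simp
    then have "fls_subdegree F \<le> t" by (rule fls_subdegree_leI)
    then show "of_int (fls_subdegree F) / of_nat e \<le> y" unfolding t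
      by (intro divide_right_mono) auto
  qed
qed



lemma td_finite: "finite ({0} \<union> {i + degree (coeff g i) | i. coeff g i \<noteq> 0})"
proof -
  have "{i + degree (coeff g i) | i. coeff g i \<noteq> 0} \<subseteq> (\<lambda>i. i + degree (coeff g i)) ` {..degree g}"
    using le_degree by blast
  then have "finite {i + degree (coeff g i) | i. coeff g i \<noteq> 0}"
    by (rule finite_subset) simp
  then show ?thesis by simp
qed

lemma td_bound: "coeff g i \<noteq> 0 \<Longrightarrow> i + degree (coeff g i) \<le> total_degree g"
  unfolding total_degree_def by (rule Max_ge[OF td_finite]) auto

lemma td_coeff: "degree (coeff g i) \<le> total_degree g"
  using td_bound[of g i] by (cases "coeff g i = 0") auto

lemma td_degree: "degree g \<le> total_degree g"
  using td_bound[of g "degree g"] by (cases "g = 0") auto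

lemma poly_sum_split:
  fixes p :: "'a::comm_semiring_1 poly"
  shows "poly p x = coeff p (degree p) * x ^ degree p + (\<Sum>i<degree p. coeff p i * x ^ i)"
  unfolding poly_altdef by (simp add: lessThan_Suc_atMost[symmetric] sum.lessThan_Suc add.commute)

lemma newton_low:
  fixes g :: "'k::field poly poly" and x :: "'k alg_closure fls"
  assumes e: "e > 0" and dg: "degree g \<ge> 1" and td: "total_degree g \<le> d"
    and root: "poly (map_poly (iota e) g) x = 0"
  shows "low x (- int (d * e))"
proof (rule ccontr)
  interpret I: inj_comm_ring_hom "iota e :: 'k poly \<Rightarrow> _" by (rule iota_inj_hom[OF e])
  assume nl: "\<not> low x (- int (d * e))"
  then have x0: "x \<noteq> 0" by auto
  define s where "s = fls_subdegree x"
  have s: "s < - int (d * e)" using nl low_mono[OF low_self[of x]] unfolding s_def by (metis not_less)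
  have s0: "s \<le> 0"
  proof -
    have "0 \<le> int (d * e)" by simp
    then show ?thesis using s by linarith
  qed
  define m where "m = degree g"
  define T where "T i = iota e (coeff g i) * x ^ i" for i
  have split: "poly (map_poly (iota e) g) x = T m + (\<Sum>i<m. T i)"
    using poly_sum_split[of "map_poly (iota e) g" x] unfolding T_def m_def by simp
  have gm: "coeff g m \<noteq> 0" using dg unfolding m_def by auto
  have im: "iota e (coeff g m) \<noteq> 0" using gm iota_eq0[OF e] by blast
  have Tm0: "T m \<noteq> 0" using im x0 unfolding T_def by simp
  define w where "w = fls_subdegree (T m)"
  have w: "w = fls_subdegree (iota e (coeff g m)) + int m * s"
    unfolding w_def T_def s_def using im x0 by (simp add: fls_subdegree_pow)
  have w1: "fls_subdegree (iota e (coeff g m)) \<le> int e * int (degree (coeff g m))"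
    using iota_subdeg_le[OF e gm] by simp
  have w2: "m + degree (coeff g m) \<le> d" using td_bound[OF gm] td by simp
  have lt: "w < int i * s" if i: "i < m" for i
  proof -
    have "(int m - int i) * s \<le> 1 * s"
      by (rule mult_right_mono_neg) (use i s0 in auto)
    moreover have "int e * int (degree (coeff g m)) \<le> int e * int d - int e"
    proof -
      have "degree (coeff g m) + 1 \<le> d" using w2 i by simp
      then have "int e * (int (degree (coeff g m)) + 1) \<le> int e * int d"
        by (intro mult_left_mono) auto
      then show ?thesis by (simp add: algebra_simps)
    qed
    moreover have "int e * int d = int (d * e)" by simp
    ultimately show ?thesis using w w1 s by (simp add: algebra_simps)
  qed
  have lowi: "low (T i) (int i * s)" for i
    using low_mult[OF iota_low[OF e, of "coeff g i"] low_pow[OF low_self[of x], of i]]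
    unfolding T_def s_def by simp
  have "low (\<Sum>i<m. T i) (w + 1)"
    by (rule low_sum, rule low_mono[OF lowi]) (use lt in \<open>auto simp: add1_zle_eq\<close>)
  then have "fls_nth (\<Sum>i<m. T i) w = 0" unfolding low_def by simp
  then have "fls_nth (poly (map_poly (iota e) g) x) w \<noteq> 0"
    using split nth_fls_subdegree_nonzero[OF Tm0] unfolding w_def by simp
  then show False using root by simp
qed



lemma poly_lessThan_sum:
  fixes R :: "'a::comm_semiring_1 poly"
  assumes "degree R < N"
  shows "(\<Sum>t<N. coeff R t * x ^ t) = poly R x"
  unfolding poly_altdef
  by (rule sum.mono_neutral_right) (use assms in \<open>auto simp: coeff_eq_0\<close>)

lemma syl_helper:
  fixes Q :: "'a::comm_ring_1 poly"
  assumes "degree Q + r < N"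
  shows "(\<Sum>j<N. coeff (monom 1 (Suc r) * Q) (N - j) * x ^ (N - 1 - j)) = x ^ r * poly Q x"
proof -
  define R where "R = monom 1 r * Q"
  have dR: "degree R < N"
    unfolding R_def using assms degree_mult_le[of "monom 1 r" Q] degree_monom_le[of "1::'a" r] by linarith
  have "(\<Sum>j<N. coeff (monom 1 (Suc r) * Q) (N - j) * x ^ (N - 1 - j))
      = (\<Sum>j<N. coeff R (N - Suc j) * x ^ (N - Suc j))"
    by (rule sum.cong) (auto simp: R_def coeff_monom_mult)
  also have "\<dots> = (\<Sum>t<N. coeff R t * x ^ t)"
    by (rule sum.nat_diff_reindex)
  also have "\<dots> = poly R x" by (rule poly_lessThan_sum[OF dR])
  finally show ?thesis by (simp add: R_def poly_monom)
qed

lemma syl_row: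
  fixes G H :: "'a::comm_ring_1 poly"
  defines "n \<equiv> degree H" and "N \<equiv> degree G + degree H"
  assumes i: "i < N"
  shows "(\<Sum>j<N. sylvester_mat G H $$ (i,j) * x ^ (N - 1 - j)) =
     (if i < n then x ^ (n - 1 - i) * poly G x else x ^ (N - 1 - i) * poly H x)"
proof -
  have "(\<Sum>j<N. sylvester_mat G H $$ (i,j) * x ^ (N - 1 - j)) =
        (\<Sum>j<N. (if i < n then coeff (monom 1 (n - i) * G) (N - j)
           else coeff (monom 1 (N - i) * H) (N - j)) * x ^ (N - 1 - j))"
    by (rule sum.cong) (use i in \<open>auto simp: sylvester_index_mat2 n_def N_def\<close>)
  also have "\<dots> = (if i < n then x ^ (n - 1 - i) * poly G x else x ^ (N - 1 - i) * poly H x)"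
  proof (cases "i < n")
    case True
    then have "n - i = Suc (n - 1 - i)" by simp
    moreover have "degree G + (n - 1 - i) < N" using True unfolding N_def n_def by simp
    ultimately show ?thesis using True syl_helper[of G "n - 1 - i" N x] by simp
  next
    case False
    then have "N - i = Suc (N - 1 - i)" using i by simp
    moreover have "degree H + (N - 1 - i) < N" using False i unfolding N_def n_def by simp
    ultimately show ?thesis using False syl_helper[of H "N - 1 - i" N x] by simp
  qed
  finally show ?thesis .
qed

lemma low_signof: "low (signof p :: 'a::comm_ring_1 fls) 0"
proof -
  have "sign p = 1 \<or> sign p = -1" by (simp add: sign_def)
  then have "signof p = (1::'a fls) \<or> signof p = - 1" by auto
  then show ?thesis using low_one low_uminus[OF low_one] by metis
qed

lemma low_det_col:
  fixes B :: "'a::comm_ring_1 fls mat"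
  assumes B: "B \<in> carrier_mat N N" and k: "k < N"
    and other: "\<And>i j. i < N \<Longrightarrow> j < N \<Longrightarrow> j \<noteq> k \<Longrightarrow> low (B $$ (i,j)) 0"
    and col: "\<And>i. i < N \<Longrightarrow> low (B $$ (i,k)) L"
  shows "low (det B) L"
proof -
  have "low (signof p * (\<Prod>i = 0..<N. B $$ (i, p i))) L" if p: "p permutes {0..<N}" for p
  proof -
    define c where "c i = (if p i = k then L else 0)" for i
    have pi: "p i < N" if "i < N" for i using p that permutes_in_image by fastforce
    have "low (\<Prod>i = 0..<N. B $$ (i, p i)) (sum c {0..<N})"
      by (rule low_prod) (use other col pi in \<open>auto simp: c_def\<close>)
    moreover have "sum c {0..<N} = L"
    proof -
      define i0 where "i0 = Hilbert_Choice.inv p k"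
      have i0: "i0 \<in> {0..<N}" using permutes_in_image[OF permutes_inv[OF p]] k i0_def by auto
      have "p i = k \<longleftrightarrow> i = i0" for i
        using permutes_inverses[OF p] i0_def by metis
      then have "sum c {0..<N} = (\<Sum>i\<in>{0..<N}. if i = i0 then L else 0)"
        unfolding c_def by simp
      also have "\<dots> = L" using i0 by simp
      finally show ?thesis .
    qed
    ultimately show ?thesis using low_mult[OF low_signof] by fastforce
  qed
  then show ?thesis unfolding det_def'[OF B] by (intro low_sum) auto
qed

lemma syl_low:
  fixes G H :: "'a::field fls poly"
  defines "m \<equiv> degree G" and "n \<equiv> degree H"
  assumes root: "poly G x = 0"
    and cG: "\<And>i. low (coeff G i) 0" and cH: "\<And>i. low (coeff H i) 0"
    and sig: "low x \<sigma>" "\<sigma> \<le> 0"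
    and vh: "low (poly H x) v"
    and k: "k < m + n"
  shows "low (x ^ (m + n - 1 - k) * resultant G H) (v + int (m - 1) * \<sigma>)"
proof -
  define N where "N = m + n"
  define A where "A = sylvester_mat G H"
  define vv where "vv = vec N (\<lambda>j. x ^ (N - 1 - j))"
  define L where "L = v + int (m - 1) * \<sigma>"
  have A: "A \<in> carrier_mat N N" unfolding A_def N_def m_def n_def by (rule sylvester_carrier_mat)
  have vv: "vv \<in> carrier_vec N" unfolding vv_def by simp
  have kN: "k < N" using k N_def by simp
  have bi: "(A *\<^sub>v vv) $ i = (if i < n then x ^ (n - 1 - i) * poly G x else x ^ (N - 1 - i) * poly H x)"
    if i: "i < N" for i
  proof -
    have "(A *\<^sub>v vv) $ i = (\<Sum>j = 0..<N. A $$ (i,j) * x ^ (N - 1 - j))"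
      using A i by (simp add: scalar_prod_def vv_def)
    also have "\<dots> = (\<Sum>j<N. A $$ (i,j) * x ^ (N - 1 - j))" by (simp add: atLeast0LessThan)
    also have "\<dots> = (if i < n then x ^ (n - 1 - i) * poly G x else x ^ (N - 1 - i) * poly H x)" unfolding A_def N_def n_def m_def by (rule syl_row) (use i in \<open>simp add: N_def m_def n_def\<close>)
    finally show ?thesis unfolding N_def m_def n_def .
  qed
  have cram: "det (replace_col A (A *\<^sub>v vv) k) = x ^ (N - 1 - k) * resultant G H"
    using cramer_lemma_mat[OF A vv kN] kN unfolding resultant_def A_def vv_def by simp
  have "low (det (replace_col A (A *\<^sub>v vv) k)) L"
  proof (rule low_det_col)
    show "replace_col A (A *\<^sub>v vv) k \<in> carrier_mat N N" using A by (simp add: replace_col_def)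
    show "k < N" by (rule kN)
  next
    fix i j assume ij: "i < N" "j < N" "j \<noteq> k"
    then have "replace_col A (A *\<^sub>v vv) k $$ (i,j) = A $$ (i,j)" using A by (simp add: replace_col_def)
    moreover have "low (A $$ (i,j)) 0"
      using ij cG cH unfolding A_def N_def m_def n_def by (auto simp: sylvester_index_mat)
    ultimately show "low (replace_col A (A *\<^sub>v vv) k $$ (i,j)) 0" by simp
  next
    fix i assume i: "i < N"
    then have eq: "replace_col A (A *\<^sub>v vv) k $$ (i,k) = (A *\<^sub>v vv) $ i" using A kN by (simp add: replace_col_def)
    show "low (replace_col A (A *\<^sub>v vv) k $$ (i,k)) L"
    proof (cases "i < n")
      case True then show ?thesis using eq bi[OF i] root by simp
    next
      case False
      have "low (x ^ (N - 1 - i) * poly H x) (int (N - 1 - i) * \<sigma> + v)"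
        by (rule low_mult[OF low_pow[OF sig(1)] vh])
      moreover have "int (m - 1) * \<sigma> \<le> int (N - 1 - i) * \<sigma>"
        by (rule mult_right_mono_neg) (use False i sig(2) in \<open>auto simp: N_def\<close>)
      moreover have "L \<le> int (N - 1 - i) * \<sigma> + v" using calculation(2) by (simp add: L_def)
      ultimately have "low (x ^ (N - 1 - i) * poly H x) L"
        using low_mono by blast
      then show ?thesis using eq bi[OF i] False by simp
    qed
  qed
  then show ?thesis using cram unfolding L_def N_def by simp
qed



lemma res_degree:
  fixes g h :: "'k::field poly poly"
  assumes a: "\<And>i. degree (coeff g i) \<le> a" and b: "\<And>i. degree (coeff h i) \<le> b"
  shows "degree (resultant g h) \<le> degree h * a + degree g * b"
proof -
  define m where "m = degree g"
  define n where "n = degree h"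
  define N where "N = m + n"
  define A where "A = sylvester_mat g h"
  have A: "A \<in> carrier_mat N N" unfolding A_def N_def m_def n_def by (rule sylvester_carrier_mat)
  have entry: "degree (A $$ (i,j)) \<le> (if i < n then a else b)" if "i < N" "j < N" for i j
    using that a b unfolding A_def N_def m_def n_def by (auto simp: sylvester_index_mat)
  have sumeq: "(\<Sum>i\<in>{0..<N}. (if i < n then a else b)) = n * a + m * b"
  proof -
    have "(\<Sum>i\<in>{0..<N}. (if i < n then a else b)) =
          (\<Sum>i\<in>{0..<n}. (if i < n then a else b)) + (\<Sum>i\<in>{n..<N}. (if i < n then a else b))"
      by (rule sum.atLeastLessThan_concat[symmetric]) (auto simp: N_def)
    also have "\<dots> = (\<Sum>i\<in>{0..<n}. a) + (\<Sum>i\<in>{n..<N}. b)"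
      by (intro arg_cong2[where f = "(+)"] sum.cong) auto
    also have "\<dots> = n * a + m * b" by (simp add: N_def)
    finally show ?thesis .
  qed
  have "degree (det A) \<le> n * a + m * b"
    unfolding det_def'[OF A]
  proof (rule degree_sum_le)
    show "finite {p. p permutes {0..<N}}" by (rule finite_permutations) simp
  next
    fix p assume p: "p \<in> {p. p permutes {0..<N}}"
    have pi: "p i < N" if "i < N" for i using p that permutes_in_image by fastforce
    have "degree (\<Prod>i = 0..<N. A $$ (i, p i)) \<le> (\<Sum>i\<in>{0..<N}. degree (A $$ (i, p i)))"
      using degree_prod_sum_le[of "{0..<N}" "\<lambda>i. A $$ (i, p i)"] by (simp add: o_def)
    also have "\<dots> \<le> (\<Sum>i\<in>{0..<N}. (if i < n then a else b))"
      by (rule sum_mono) (use entry pi in auto)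
    finally have P: "degree (\<Prod>i = 0..<N. A $$ (i, p i)) \<le> n * a + m * b" using sumeq by simp
    have "sign p = 1 \<or> sign p = -1" by (simp add: sign_def)
    then show "degree (signof p * (\<Prod>i = 0..<N. A $$ (i, p i))) \<le> n * a + m * b"
      using P by auto
  qed
  then show ?thesis unfolding A_def resultant_def m_def n_def .
qed


theorem mainTheorem6:
  fixes g h :: "'k::field_char_0 poly poly"
    and phi :: "rat \<Rightarrow> 'k alg_closure"
    and d \<delta> :: nat
  assumes "irreducible g"
    and "total_degree g = d"
    and "pderiv g \<noteq> 0"
    and "puiseux phi"
    and "ps_eval g phi = (\<lambda>_. 0)"
    and "degree h \<le> \<delta>"
    and "\<forall>i. degree (coeff h i) \<le> \<delta>"
    and "ps_eval h phi \<noteq> (\<lambda>_. 0)"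
  shows "\<bar>ps_val (ps_eval h phi)\<bar> \<le> 2 * of_nat d * of_nat \<delta>"
proof -
  note irr = assms(1) and td = assms(2) and pd = assms(3) and pu = assms(4)
    and rootg = assms(5) and dh = assms(6) and ch = assms(7) and hnz = assms(8)
  obtain e t0 where e: "e > 0" and phiL: "latt e phi t0"
    using pu unfolding puiseux_def latt_def by blast
  interpret I: inj_comm_ring_hom "iota e :: 'k poly \<Rightarrow> _" by (rule iota_inj_hom[OF e])
  interpret MI: map_poly_comm_ring_hom "iota e :: 'k poly \<Rightarrow> _" ..
  define x where "x = tofls e phi"
  define G where "G = map_poly (iota e) g"
  define H where "H = map_poly (iota e) h"
  obtain Mh where hL: "latt e (ps_eval h phi) Mh" using ps_eval_tofls(1)[OF e phiL] by blast
  have Vdef: "tofls e (ps_eval h phi) = poly H x" unfolding H_def x_def by (rule ps_eval_tofls(2)[OF e phiL])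
  have rootG: "poly G x = 0"
  proof -
    have "tofls e (ps_eval g phi) = 0" unfolding rootg by (rule tofls_zero[OF e])
    then show ?thesis using ps_eval_tofls(2)[OF e phiL, of g] unfolding G_def x_def by simp
  qed
  define V where "V = poly H x"
  have V0: "V \<noteq> 0" using tofls_eq0[OF e hL] hnz Vdef V_def by simp
  define vh where "vh = fls_subdegree V"
  have val: "ps_val (ps_eval h phi) = of_int vh / of_nat e"
    using ps_val_tofls[OF e hL hnz] Vdef unfolding vh_def V_def by simp
  have mg: "degree g \<ge> 1"
  proof (rule ccontr)
    assume "\<not> degree g \<ge> 1"
    then have "degree g = 0" by simp
    then have "pderiv g = 0" using pderiv_eq_0_iff by blast
    with pd show False by simp
  qed
  have gd: "degree g \<le> d" using td_degree[of g] td by simp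
  have cg: "degree (coeff g i) \<le> d" for i using td_coeff[of g i] td by simp
  have lowx: "low x (- int (d * e))"
    by (rule newton_low[OF e mg _ rootG[unfolded G_def]]) (use td in simp)
  have lowV: "low V (- int (\<delta> * d * e))"
  proof -
    have "V = (\<Sum>j\<le>degree h. iota e (coeff h j) * x ^ j)"
      unfolding V_def H_def poly_altdef by simp
    moreover have "low (iota e (coeff h j) * x ^ j) (- int (\<delta> * d * e))" if j: "j \<le> degree h" for j
    proof -
      have "low (iota e (coeff h j) * x ^ j) (0 + int j * (- int (d * e)))"
        by (rule low_mult[OF iota_low[OF e] low_pow[OF lowx]])
      moreover have "- int (\<delta> * d * e) \<le> 0 + int j * (- int (d * e))"
      proof -
        have "int j * int (d * e) \<le> int \<delta> * int (d * e)" using j dh by (intro mult_right_mono) auto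
        then show ?thesis by (simp add: algebra_simps)
      qed
      ultimately show ?thesis by (rule low_mono)
    qed
    ultimately show ?thesis by (auto intro: low_sum)
  qed
  have lower: "- int (\<delta> * d * e) \<le> vh" unfolding vh_def by (rule low_subdeg[OF V0 lowV])
  define R where "R = resultant g h"
  have ndvd: "\<not> g dvd h"
  proof
    assume "g dvd h"
    then obtain q where "h = g * q" unfolding dvd_def by blast
    then have "H = G * map_poly (iota e) q" unfolding H_def G_def by (simp add: MI.hom_mult)
    then have "V = 0" unfolding V_def using rootG by simp
    with V0 show False by simp
  qed
  have R0: "R \<noteq> 0" unfolding R_def by (rule res_nonzero[OF irr ndvd])
  have resG: "resultant G H = iota e R"
    unfolding G_def H_def R_def by (rule I.resultant_map_poly) simp_all
  have iR0: "iota e R \<noteq> 0" using R0 iota_eq0[OF e] by blast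
  have degR: "degree R \<le> 2 * d * \<delta>"
  proof -
    have "degree R \<le> degree h * d + degree g * \<delta>"
      unfolding R_def by (rule res_degree) (use cg ch in auto)
    also have "\<dots> \<le> \<delta> * d + d * \<delta>" using dh gd by (intro add_mono mult_right_mono) auto
    also have "\<dots> = 2 * d * \<delta>" by (simp add: algebra_simps)
    finally show ?thesis .
  qed
  have sdR: "fls_subdegree (iota e R) \<le> int (e * (2 * d * \<delta>))"
  proof -
    have "fls_subdegree (iota e R) \<le> int (e * degree R)" by (rule iota_subdeg_le[OF e R0])
    also have "\<dots> \<le> int (e * (2 * d * \<delta>))" using degR by (simp only: of_nat_le_iff mult_le_mono2)
    finally show ?thesis .
  qed
  have cG: "low (coeff G i) 0" for i unfolding G_def using iota_low[OF e] by simp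
  have cH: "low (coeff H i) 0" for i unfolding H_def using iota_low[OF e] by simp
  have mG: "degree G = degree g" "degree H = degree h" unfolding G_def H_def by simp_all
  have lV: "low (poly H x) vh" using low_self[of V] unfolding vh_def V_def .
  have vhR: "vh \<le> fls_subdegree (iota e R)"
  proof (cases "x \<noteq> 0 \<and> fls_subdegree x < 0")
    case False
    then have lx: "low x 0" using low_mono[OF low_self[of x]] by (cases "x = 0") auto
    have "low (x ^ (degree G + degree H - 1 - (degree G + degree H - 1)) * resultant G H)
           (vh + int (degree G - 1) * 0)"
      by (rule syl_low[OF rootG cG cH lx _ lV])
         (use mg mG in \<open>simp_all add: vh_def V_def\<close>)
    then have "low (iota e R) vh" using resG by simp
    then show ?thesis by (rule low_subdeg[OF iR0])
  next
    case True
    define s where "s = fls_subdegree x"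
    have x0: "x \<noteq> 0" and s0: "s < 0" using True s_def by auto
    have "low (x ^ (degree G + degree H - 1 - 0) * resultant G H) (vh + int (degree G - 1) * s)"
      by (rule syl_low[OF rootG cG cH low_self[of x, folded s_def] _ lV])
         (use mg mG s0 in \<open>simp_all add: vh_def V_def\<close>)
    then have L: "low (x ^ (degree g + degree h - 1) * iota e R) (vh + int (degree g - 1) * s)"
      using resG mG by simp
    have "vh + int (degree g - 1) * s \<le> fls_subdegree (x ^ (degree g + degree h - 1) * iota e R)"
      by (rule low_subdeg[OF _ L]) (use x0 iR0 in simp)
    also have "\<dots> = int (degree g + degree h - 1) * s + fls_subdegree (iota e R)"
      using x0 iR0 by (simp add: fls_subdegree_pow s_def)
    finally have "vh + int (degree g - 1) * s \<le> int (degree g + degree h - 1) * s + fls_subdegree (iota e R)" .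
    moreover have "int (degree g + degree h - 1) * s = int (degree g - 1) * s + int (degree h) * s"
      using mg by (simp add: algebra_simps of_nat_diff)
    moreover have "int (degree h) * s \<le> 0" using s0 by (simp add: mult_nonneg_nonpos)
    ultimately show ?thesis by linarith
  qed
  have upper: "vh \<le> int (e * (2 * d * \<delta>))" using vhR sdR by linarith
  have "\<bar>of_int vh / of_nat e :: rat\<bar> \<le> 2 * of_nat d * of_nat \<delta>"
  proof -
    have lo: "- (of_nat e * (2 * of_nat d * of_nat \<delta>)) \<le> (of_int vh :: rat)"
    proof -
      have "- int (e * (2 * d * \<delta>)) \<le> - int (\<delta> * d * e)" by simp
      then have "- int (e * (2 * d * \<delta>)) \<le> vh" using lower by linarith
      then have "(of_int (- int (e * (2 * d * \<delta>))) :: rat) \<le> of_int vh" by (rule of_int_le_iff[THEN iffD2])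
      then show ?thesis by simp
    qed
    have up: "(of_int vh :: rat) \<le> of_nat e * (2 * of_nat d * of_nat \<delta>)"
    proof -
      have "(of_int vh :: rat) \<le> of_int (int (e * (2 * d * \<delta>)))" using upper by (rule of_int_le_iff[THEN iffD2])
      then show ?thesis by simp
    qed
    have ep: "(0::rat) < of_nat e" using e by simp
    show ?thesis using lo up ep by (simp add: abs_le_iff field_simps)
  qed
  then show ?thesis using val by simp
qed


end
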